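(* Let $X$ be a fibrewise pointed space over $B$. Then (4) $\mathrm{cat}^B_B(X)\le\mathrm{TC}^B_B(X)\le\mathrm{cat}^B_B(X\times_BX)$; and (5) for every continuous map $\lambda:B'\to B$, $\mathrm{TC}^{B'}_{B'}(\lambda^*(X))\le\mathrm{TC}^B_B(X)$.
   Context: A fibrewise space over $B$ is a space $X$ with $p_X:X\to B$; fibrewise maps satisfy $p_Y\circ f=p_X$. A fibrewise pointed space has $s_X:B\to X$ with $p_X\circ s_X=1_B$; fibrewise pointed maps satisfy also $f\circ s_X=s_Y$. A fibrewise pointed homotopy $H:X\times I\to Y$ satisfies $p_Y(H(x,t))=p_X(x)$ and $H(s_X(b),t)=s_Y(b)$; written $\simeq^B_B$. For a fibrewise pointed map $f:E\to X$, an open $U\supseteq s_X(B)$ is fibrewise pointed sectional if there is a fibrewise pointed map $s:U\to E$ with $f\circ s\simeq^B_B$ the inclusion; $\mathrm{secat}^B_B(f)$ is the least $n$ such that $X$ is covered by $n+1$ such open sets. The James–Morris fibrewise L.-S. category is $\mathrm{cat}^B_B(X)=\mathrm{secat}^B_B(s_X)$ ($B$ pointed by $1_B$), i.e. the least $n$ such that $X$ is covered by $n+1$ open sets $U\supseteq s_X(B)$ whose inclusion is fibrewise pointed homotopic to $s_X\circ p_X|_U$. $X\times_BX=\{(x,y):p_X(x)=p_X(y)\}$ with section $b\mapsto(s_X(b),s_X(b))$; $P_B(X)=\{(b,\alpha)\in B\times X^I:p_X\circ\alpha\equiv b\}$ with projection $(b,\alpha)\mapsto b$ and section $b\mapsto(b,c_{s_X(b)})$;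 $\Pi_X(b,\alpha)=(\alpha(0),\alpha(1))$; $\mathrm{TC}^B_B(X):=\mathrm{secat}^B_B(\Pi_X)$. For $\lambda:B'\to B$, $\lambda^*(X)=\{(b',x)\in B'\times X:\lambda(b')=p_X(x)\}$ with projection $(b',x)\mapsto b'$ and section $b'\mapsto(b',s_X(\lambda(b')))$, a fibrewise pointed space over $B'$. *)

theory Defs
  imports "HOL-Analysis.Analysis" "HOL-Library.Extended_Nat"
begin

definition fibrewise_pointed_space ::
  "'b topology \<Rightarrow> 'a topology \<Rightarrow> ('a \<Rightarrow> 'b) \<Rightarrow> ('b \<Rightarrow> 'a) \<Rightarrow> bool" where
  "fibrewise_pointed_space B X p s \<longleftrightarrow>
     continuous_map X B p \<and> continuous_map B X s \<and> (\<forall>b\<in>topspace B. p (s b) = b)"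

definition fp_sectional ::
  "'b topology \<Rightarrow> 'e topology \<Rightarrow> ('e \<Rightarrow> 'b) \<Rightarrow> ('b \<Rightarrow> 'e) \<Rightarrow>
   'x topology \<Rightarrow> ('x \<Rightarrow> 'b) \<Rightarrow> ('b \<Rightarrow> 'x) \<Rightarrow> ('e \<Rightarrow> 'x) \<Rightarrow> 'x set \<Rightarrow> bool" where
  "fp_sectional B E pE sE X pX sX f U \<longleftrightarrow>
     openin X U \<and> sX ` topspace B \<subseteq> U \<and>
     (\<exists>s. continuous_map (subtopology X U) E s \<and>
          (\<forall>x\<in>U. pE (s x) = pX x) \<and>
          (\<forall>b\<in>topspace B. s (sX b) = sE b) \<and>
          homotopic_with
            (\<lambda>h. (\<forall>x\<in>U. pX (h x) = pX x) \<and> (\<forall>b\<in>topspace B. h (sX b) = sX b))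
            (subtopology X U) X (f \<circ> s) id)"

text \<open>Fibrewise pointed sectional category secat^B_B(f) (infinite if no finite cover).\<close>
definition secatBB ::
  "'b topology \<Rightarrow> 'e topology \<Rightarrow> ('e \<Rightarrow> 'b) \<Rightarrow> ('b \<Rightarrow> 'e) \<Rightarrow>
   'x topology \<Rightarrow> ('x \<Rightarrow> 'b) \<Rightarrow> ('b \<Rightarrow> 'x) \<Rightarrow> ('e \<Rightarrow> 'x) \<Rightarrow> enat" where
  "secatBB B E pE sE X pX sX f =
     Inf {enat n | n. \<exists>U :: nat \<Rightarrow> 'x set.
            (\<forall>i\<le>n. fp_sectional B E pE sE X pX sX f (U i)) \<and>
            (\<Union>i\<le>n. U i) = topspace X}"

definition catBB :: "'b topology \<Rightarrow> 'a topology \<Rightarrow> ('a \<Rightarrow> 'b) \<Rightarrow> ('b \<Rightarrow> 'a) \<Rightarrow> enat" where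
  "catBB B X p s = secatBB B B id id X p s s"

definition fib_prod_space :: "('a \<Rightarrow> 'b) \<Rightarrow> 'a topology \<Rightarrow> ('a \<times> 'a) topology" where
  "fib_prod_space p X = subtopology (prod_topology X X)
     {(x, y). x \<in> topspace X \<and> y \<in> topspace X \<and> p x = p y}"

definition fib_prod_proj :: "('a \<Rightarrow> 'b) \<Rightarrow> 'a \<times> 'a \<Rightarrow> 'b" where
  "fib_prod_proj p = (\<lambda>(x, y). p x)"

definition fib_prod_sec :: "('b \<Rightarrow> 'a) \<Rightarrow> 'b \<Rightarrow> 'a \<times> 'a" where
  "fib_prod_sec s = (\<lambda>b. (s b, s b))"

text \<open>Compact-open topology on the paths I -> X (paths represented as functions
  real => 'a that are continuous on I = [0,1] and undefined outside I).\<close>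
definition path_space_top :: "'a topology \<Rightarrow> (real \<Rightarrow> 'a) topology" where
  "path_space_top X = subtopology
     (topology_generated_by
        {{\<alpha>. \<alpha> ` K \<subseteq> U} | K U. compactin (top_of_set {0..1::real}) K \<and> openin X U})
     {\<alpha>. pathin X \<alpha> \<and> \<alpha> \<in> extensional {0..1}}"

definition fib_path_space ::
  "'b topology \<Rightarrow> 'a topology \<Rightarrow> ('a \<Rightarrow> 'b) \<Rightarrow> ('b \<times> (real \<Rightarrow> 'a)) topology" where
  "fib_path_space B X p = subtopology (prod_topology B (path_space_top X))
     {(b, \<alpha>). b \<in> topspace B \<and> pathin X \<alpha> \<and> \<alpha> \<in> extensional {0..1} \<and>
               (\<forall>t\<in>{0..1}. p (\<alpha> t) = b)}"

definition fib_path_proj :: "'b \<times> (real \<Rightarrow> 'a) \<Rightarrow> 'b" where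
  "fib_path_proj = fst"

definition fib_path_sec :: "('b \<Rightarrow> 'a) \<Rightarrow> 'b \<Rightarrow> 'b \<times> (real \<Rightarrow> 'a)" where
  "fib_path_sec s = (\<lambda>b. (b, restrict (\<lambda>t. s b) {0..1}))"

definition fib_Pi :: "'b \<times> (real \<Rightarrow> 'a) \<Rightarrow> 'a \<times> 'a" where
  "fib_Pi = (\<lambda>(b, \<alpha>). (\<alpha> 0, \<alpha> 1))"

definition TCBB :: "'b topology \<Rightarrow> 'a topology \<Rightarrow> ('a \<Rightarrow> 'b) \<Rightarrow> ('b \<Rightarrow> 'a) \<Rightarrow> enat" where
  "TCBB B X p s =
     secatBB B (fib_path_space B X p) fib_path_proj (fib_path_sec s)
              (fib_prod_space p X) (fib_prod_proj p) (fib_prod_sec s) fib_Pi"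

definition pullback_space ::
  "'c topology \<Rightarrow> ('c \<Rightarrow> 'b) \<Rightarrow> 'a topology \<Rightarrow> ('a \<Rightarrow> 'b) \<Rightarrow> ('c \<times> 'a) topology" where
  "pullback_space B' lam X p = subtopology (prod_topology B' X)
     {(b', x). b' \<in> topspace B' \<and> x \<in> topspace X \<and> lam b' = p x}"

definition pullback_proj :: "'c \<times> 'a \<Rightarrow> 'c" where
  "pullback_proj = fst"

definition pullback_sec :: "('c \<Rightarrow> 'b) \<Rightarrow> ('b \<Rightarrow> 'a) \<Rightarrow> 'c \<Rightarrow> 'c \<times> 'a" where
  "pullback_sec lam s = (\<lambda>b'. (b', s (lam b')))"

end

theory Submission
  imports Defs
begin

lemma Union_CO:
  "\<Union>{{\<alpha>::real\<Rightarrow>'a. \<alpha> ` K \<subseteq> U} | K U. compactin (top_of_set {0..1::real}) K \<and> openin X U} = UNIV"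
proof -
  have "UNIV \<in> {{\<alpha>::real\<Rightarrow>'a. \<alpha> ` K \<subseteq> U} | K U. compactin (top_of_set {0..1::real}) K \<and> openin X U}"
    by (rule CollectI, rule exI[of _ "{}"], rule exI[of _ "{}"]) auto
  then show ?thesis by blast
qed

lemma topspace_path_space_top:
  "topspace (path_space_top X) = {\<alpha>. pathin X \<alpha> \<and> \<alpha> \<in> extensional {0..1}}"
proof -
  have "UNIV \<in> {{\<alpha>::real\<Rightarrow>'a. \<alpha> ` K \<subseteq> U} | K U. compactin (top_of_set {0..1::real}) K \<and> openin X U}"
    by (rule CollectI, rule exI[of _ "{}"], rule exI[of _ "{}"]) auto
  then have "\<Union>{{\<alpha>::real\<Rightarrow>'a. \<alpha> ` K \<subseteq> U} | K U. compactin (top_of_set {0..1::real}) K \<and> openin X U} = UNIV"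
    by blast
  then show ?thesis unfolding path_space_top_def by simp
qed

lemma openin_path_space_top_basic:
  assumes "compactin (top_of_set {0..1::real}) K" "openin X U"
  shows "openin (path_space_top X) ({\<alpha>. pathin X \<alpha> \<and> \<alpha> \<in> extensional {0..1}} \<inter> {\<alpha>. \<alpha> ` K \<subseteq> U})"
  unfolding path_space_top_def
  by (rule openin_subtopology_Int2, rule topology_generated_by_Basis) (use assms in blast)

lemma path_curry:
  fixes f :: "'z \<Rightarrow> real \<Rightarrow> 'a"
  assumes cf: "continuous_map (prod_topology Z (top_of_set {0..1})) X (\<lambda>(z,t). f z t)"
  shows "continuous_map Z (path_space_top X) (\<lambda>z. restrict (f z) {0..1})"
  unfolding path_space_top_def
proof (rule continuous_map_in_subtopology[THEN iffD2], intro conjI)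
  show "(\<lambda>z. restrict (f z) {0..1}) \<in> topspace Z \<rightarrow> {\<alpha>. pathin X \<alpha> \<and> \<alpha> \<in> extensional {0..1}}"
  proof -
    have "pathin X (restrict (f z) {0..1})" if z: "z \<in> topspace Z" for z
    proof -
    have "continuous_map (top_of_set {0..1}) X ((\<lambda>(z,t). f z t) \<circ> (\<lambda>t. (z,t)))"
      by (rule continuous_map_o_Pair[OF cf z])
    then show "pathin X (restrict (f z) {0..1})"
      unfolding pathin_def by (rule continuous_map_eq) auto
    qed
    then show ?thesis by (auto simp: Pi_iff)
  qed
  show "continuous_map Z (topology_generated_by
     {{\<alpha>. \<alpha> ` K \<subseteq> U} | K U. compactin (top_of_set {0..1}) K \<and> openin X U}) (\<lambda>z. restrict (f z) {0..1})"
  proof (rule continuous_on_generated_topo)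
    fix V assume "V \<in> {{\<alpha>. \<alpha> ` K \<subseteq> U} | K U. compactin (top_of_set {0..1::real}) K \<and> openin X U}"
    then obtain K U where V: "V = {\<alpha>. \<alpha> ` K \<subseteq> U}" and K: "compactin (top_of_set {0..1::real}) K"
      and U: "openin X U" by blast
    have K01: "K \<subseteq> {0..1}" using compactin_subset_topspace[OF K] by simp
    let ?W = "{w \<in> topspace (prod_topology Z (top_of_set {0..1})). (\<lambda>(z,t). f z t) w \<in> U}"
    have oW: "openin (prod_topology Z (top_of_set {0..1})) ?W"
      using openin_continuous_map_preimage[OF cf U] .
    show "openin Z ((\<lambda>z. restrict (f z) {0..1}) -` V \<inter> topspace Z)"
    proof (rule openin_subopen[THEN iffD2], intro ballI)
      fix z0 assume z0: "z0 \<in> (\<lambda>z. restrict (f z) {0..1}) -` V \<inter> topspace Z"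
      have "{z0} \<times> K \<subseteq> ?W"
      proof
        fix w assume "w \<in> {z0} \<times> K"
        then obtain t where w: "w = (z0, t)" "t \<in> K" by blast
        have "restrict (f z0) {0..1} t \<in> U" using z0 V w(2) by blast
        then show "w \<in> ?W" using w K01 z0 by auto
      qed
      moreover have "z0 \<in> topspace Z" using z0 by blast
      ultimately have "\<exists>A C. openin Z A \<and> openin (top_of_set {0..1}) C \<and> z0 \<in> A \<and> K \<subseteq> C \<and> A \<times> C \<subseteq> ?W"
        using tube_lemma_right[OF oW K] by blast
      then obtain A C where A: "openin Z A" "z0 \<in> A" and C: "openin (top_of_set {0..1}) C" "K \<subseteq> C"
        and AC: "A \<times> C \<subseteq> ?W" by blast
      have "A \<subseteq> (\<lambda>z. restrict (f z) {0..1}) -` V \<inter> topspace Z"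
      proof
        fix z assume "z \<in> A"
        then have "\<forall>t\<in>K. (z,t) \<in> ?W" using AC C by blast
        moreover have "z \<in> topspace Z" using \<open>z \<in> A\<close> A(1) openin_subset by blast
        ultimately show "z \<in> (\<lambda>z. restrict (f z) {0..1}) -` V \<inter> topspace Z"
          using V K01 by auto
      qed
      then show "\<exists>T. openin Z T \<and> z0 \<in> T \<and> T \<subseteq> (\<lambda>z. restrict (f z) {0..1}) -` V \<inter> topspace Z"
        using A by blast
    qed
  qed (simp add: Union_CO)
qed

lemma path_eval:
  "continuous_map (prod_topology (path_space_top X) (top_of_set {0..1})) X (\<lambda>(\<alpha>,t). \<alpha> t)"
proof (subst continuous_map_openin_preimage_eq, intro conjI allI impI)
  show "(\<lambda>(\<alpha>,t). \<alpha> t) \<in> topspace (prod_topology (path_space_top X) (top_of_set {0..1})) \<rightarrow> topspace X"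
    by (auto simp: topspace_path_space_top pathin_def continuous_map_def)
  fix W assume W: "openin X W"
  show "openin (prod_topology (path_space_top X) (top_of_set {0..1}))
     (topspace (prod_topology (path_space_top X) (top_of_set {0..1})) \<inter> (\<lambda>(\<alpha>,t). \<alpha> t) -` W)"
  proof (rule openin_subopen[THEN iffD2], intro ballI)
    fix w assume w: "w \<in> topspace (prod_topology (path_space_top X) (top_of_set {0..1})) \<inter> (\<lambda>(\<alpha>,t). \<alpha> t) -` W"
    obtain \<alpha>0 t0 where w_eq: "w = (\<alpha>0, t0)" by (cases w)
    have a0: "pathin X \<alpha>0" "\<alpha>0 \<in> extensional {0..1}" and t0: "t0 \<in> {0..1}" and a0t0: "\<alpha>0 t0 \<in> W"
      using w by (auto simp: w_eq topspace_path_space_top)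
    have "openin (top_of_set {0..1}) {t \<in> topspace (top_of_set {0..1}). \<alpha>0 t \<in> W}"
      using openin_continuous_map_preimage[OF a0(1)[unfolded pathin_def] W] by simp
    then obtain e where e: "e > 0" and eA: "\<And>t'. t' \<in> {0..1} \<Longrightarrow> dist t' t0 < e \<Longrightarrow> \<alpha>0 t' \<in> W"
      using t0 a0t0 unfolding openin_euclidean_subtopology_iff by auto
    define K where "K = {0..1} \<inter> cball t0 (e/2)"
    have Kc: "compactin (top_of_set {0..1::real}) K"
      unfolding K_def compactin_subtopology
      by (auto intro!: compact_Int_closed)
    have N1: "openin (path_space_top X) ({\<alpha>. pathin X \<alpha> \<and> \<alpha> \<in> extensional {0..1}} \<inter> {\<alpha>. \<alpha> ` K \<subseteq> W})"
      by (rule openin_path_space_top_basic[OF Kc W])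
    have N2: "openin (top_of_set {0..1::real}) ({0..1} \<inter> ball t0 (e/2))"
      by (auto intro: openin_subtopology_Int2)
    have "\<alpha>0 ` K \<subseteq> W" using eA e by (auto simp: K_def dist_commute)
    then have "w \<in> ({\<alpha>. pathin X \<alpha> \<and> \<alpha> \<in> extensional {0..1}} \<inter> {\<alpha>. \<alpha> ` K \<subseteq> W}) \<times> ({0..1} \<inter> ball t0 (e/2))"
      using a0 t0 e by (simp add: w_eq)
    moreover have "({\<alpha>. pathin X \<alpha> \<and> \<alpha> \<in> extensional {0..1}} \<inter> {\<alpha>. \<alpha> ` K \<subseteq> W}) \<times> ({0..1} \<inter> ball t0 (e/2))
        \<subseteq> topspace (prod_topology (path_space_top X) (top_of_set {0..1})) \<inter> (\<lambda>(\<alpha>,t). \<alpha> t) -` W"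
    proof (rule subsetI)
      fix v assume v: "v \<in> ({\<alpha>. pathin X \<alpha> \<and> \<alpha> \<in> extensional {0..1}} \<inter> {\<alpha>. \<alpha> ` K \<subseteq> W}) \<times> ({0..1} \<inter> ball t0 (e/2))"
      obtain a b where v_eq: "v = (a,b)" by (cases v)
      from v have a: "pathin X a" "a \<in> extensional {0..1}" "a ` K \<subseteq> W" and b: "b \<in> {0..1}" "b \<in> ball t0 (e/2)"
        by (simp_all add: v_eq)
      have "b \<in> K" unfolding K_def using b by (simp add: less_imp_le)
      then have "a b \<in> W" using a(3) by blast
      then show "v \<in> topspace (prod_topology (path_space_top X) (top_of_set {0..1})) \<inter> (\<lambda>(\<alpha>,t). \<alpha> t) -` W"
        using a(1,2) b(1) by (simp add: v_eq topspace_path_space_top)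
    qed
    ultimately show "\<exists>T. openin (prod_topology (path_space_top X) (top_of_set {0..1})) T \<and> w \<in> T \<and>
       T \<subseteq> topspace (prod_topology (path_space_top X) (top_of_set {0..1})) \<inter> (\<lambda>(\<alpha>,t). \<alpha> t) -` W"
    proof (intro exI conjI)
      show "openin (prod_topology (path_space_top X) (top_of_set {0..1}))
        (({\<alpha>. pathin X \<alpha> \<and> \<alpha> \<in> extensional {0..1}} \<inter> {\<alpha>. \<alpha> ` K \<subseteq> W}) \<times> ({0..1} \<inter> ball t0 (e/2)))"
        using N1 N2 by (simp add: openin_prod_Times_iff)
    qed
  qed
qed


lemma secat_mono:
  assumes img: "\<phi> ` topspace X2 \<subseteq> topspace X1"
  and tr: "\<And>U. fp_sectional B1 E1 pE1 sE1 X1 pX1 sX1 f1 U \<Longrightarrow>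
             fp_sectional B2 E2 pE2 sE2 X2 pX2 sX2 f2 {x \<in> topspace X2. \<phi> x \<in> U}"
  shows "secatBB B2 E2 pE2 sE2 X2 pX2 sX2 f2 \<le> secatBB B1 E1 pE1 sE1 X1 pX1 sX1 f1"
  unfolding secatBB_def
proof (rule Inf_superset_mono, rule subsetI)
  fix m assume "m \<in> {enat n | n. \<exists>U. (\<forall>i\<le>n. fp_sectional B1 E1 pE1 sE1 X1 pX1 sX1 f1 (U i)) \<and>
            (\<Union>i\<le>n. U i) = topspace X1}"
  then obtain n U where m: "m = enat n" and U: "\<forall>i\<le>n. fp_sectional B1 E1 pE1 sE1 X1 pX1 sX1 f1 (U i)"
    "(\<Union>i\<le>n. U i) = topspace X1" by blast
  define V where "V = (\<lambda>i. {x \<in> topspace X2. \<phi> x \<in> U i})"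
  have "\<forall>i\<le>n. fp_sectional B2 E2 pE2 sE2 X2 pX2 sX2 f2 (V i)" using U(1) tr unfolding V_def by blast
  moreover have "(\<Union>i\<le>n. V i) = topspace X2"
  proof
    show "(\<Union>i\<le>n. V i) \<subseteq> topspace X2" unfolding V_def by blast
    show "topspace X2 \<subseteq> (\<Union>i\<le>n. V i)"
    proof
      fix x assume x: "x \<in> topspace X2"
      then have "\<phi> x \<in> (\<Union>i\<le>n. U i)" using img U(2) by blast
      then obtain i where "i \<le> n" "\<phi> x \<in> U i" by blast
      then show "x \<in> (\<Union>i\<le>n. V i)" using x unfolding V_def by blast
    qed
  qed
  ultimately show "m \<in> {enat n | n. \<exists>U. (\<forall>i\<le>n. fp_sectional B2 E2 pE2 sE2 X2 pX2 sX2 f2 (U i)) \<and>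
            (\<Union>i\<le>n. U i) = topspace X2}" using m by blast
qed

lemma topspace_fib_prod:
  "topspace (fib_prod_space p X) = {(x,y). x \<in> topspace X \<and> y \<in> topspace X \<and> p x = p y}"
  unfolding fib_prod_space_def by auto

lemma cont_fst_fib_prod: "continuous_map (fib_prod_space p X) X fst"
  unfolding fib_prod_space_def by (rule continuous_map_subtopology_fst)

lemma cont_snd_fib_prod: "continuous_map (fib_prod_space p X) X snd"
  unfolding fib_prod_space_def by (rule continuous_map_subtopology_snd)

lemma fib_prod_proj_eq: "fib_prod_proj p = p \<circ> fst"
  unfolding fib_prod_proj_def by auto

lemma cont_fib_prod_proj:
  "continuous_map X B p \<Longrightarrow> continuous_map (fib_prod_space p X) B (fib_prod_proj p)"
  unfolding fib_prod_proj_eq by (rule continuous_map_compose[OF cont_fst_fib_prod])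

lemma topspace_fib_path:
  "topspace (fib_path_space B X p) = {(b, \<alpha>). b \<in> topspace B \<and> pathin X \<alpha> \<and> \<alpha> \<in> extensional {0..1} \<and>
               (\<forall>t\<in>{0..1}. p (\<alpha> t) = b)}"
  unfolding fib_path_space_def by (auto simp: topspace_path_space_top)

lemma cont_into_fib_path:
  assumes g: "continuous_map Z B g"
    and f: "continuous_map (prod_topology Z (top_of_set {0..1})) X (\<lambda>(z,t). f z t)"
    and pf: "\<And>z t. z \<in> topspace Z \<Longrightarrow> t \<in> {0..1} \<Longrightarrow> p (f z t) = g z"
  shows "continuous_map Z (fib_path_space B X p) (\<lambda>z. (g z, restrict (f z) {0..1}))"
  unfolding fib_path_space_def
proof (rule continuous_map_in_subtopology[THEN iffD2], intro conjI)
  have cf: "continuous_map Z (path_space_top X) (\<lambda>z. restrict (f z) {0..1})"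
    by (rule path_curry[OF f])
  show "continuous_map Z (prod_topology B (path_space_top X)) (\<lambda>z. (g z, restrict (f z) {0..1}))"
    using g cf by (simp add: continuous_map_paired)
  have "restrict (f z) {0..1} \<in> topspace (path_space_top X)" if "z \<in> topspace Z" for z
    using continuous_map_funspace[OF cf] that by blast
  moreover have "g z \<in> topspace B" if "z \<in> topspace Z" for z
    using continuous_map_funspace[OF g] that by blast
  ultimately show "(\<lambda>z. (g z, restrict (f z) {0..1})) \<in> topspace Z \<rightarrow>
     {(b, \<alpha>). b \<in> topspace B \<and> pathin X \<alpha> \<and> \<alpha> \<in> extensional {0..1} \<and> (\<forall>t\<in>{0..1}. p (\<alpha> t) = b)}"
    using pf by (auto simp: topspace_path_space_top)
qed


lemma fib_Pi_eq: "fib_Pi z = (snd z 0, snd z 1)"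
  by (cases z) (simp add: fib_Pi_def)

lemma part_a_sectional:
  assumes fps: "fibrewise_pointed_space B X p s"
   and V: "fp_sectional B (fib_path_space B X p) fib_path_proj (fib_path_sec s)
           (fib_prod_space p X) (fib_prod_proj p) (fib_prod_sec s) fib_Pi V"
  shows "fp_sectional B B id id X p s s {x \<in> topspace X. (x, s (p x)) \<in> V}"
proof -
  have cp: "continuous_map X B p" and cs: "continuous_map B X s" and ps: "\<And>b. b \<in> topspace B \<Longrightarrow> p (s b) = b"
    using fps unfolding fibrewise_pointed_space_def by auto
  let ?XX = "fib_prod_space p X"
  let ?PB = "fib_path_space B X p"
  let ?PV = "\<lambda>h. (\<forall>x\<in>V. fib_prod_proj p (h x) = fib_prod_proj p x) \<and>
                (\<forall>b\<in>topspace B. h (fib_prod_sec s b) = fib_prod_sec s b)"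
  obtain \<sigma> where oV: "openin ?XX V" and secV: "fib_prod_sec s ` topspace B \<subseteq> V"
    and c\<sigma>: "continuous_map (subtopology ?XX V) ?PB \<sigma>"
    and \<sigma>p: "\<forall>x\<in>V. fib_path_proj (\<sigma> x) = fib_prod_proj p x"
    and \<sigma>s: "\<forall>b\<in>topspace B. \<sigma> (fib_prod_sec s b) = fib_path_sec s b"
    and hom: "homotopic_with ?PV (subtopology ?XX V) ?XX (fib_Pi \<circ> \<sigma>) id"
    using V unfolding fp_sectional_def by blast
  have VXX: "V \<subseteq> topspace ?XX" using openin_subset[OF oV] .
  have tsV: "topspace (subtopology ?XX V) = V" using VXX by (simp add: topspace_subtopology Int_absorb1)
  define j where "j = (\<lambda>x. (x, s (p x)))"
  have spx: "s (p x) \<in> topspace X" "p (s (p x)) = p x" if "x \<in> topspace X" for x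
  proof -
    have "p x \<in> topspace B" using continuous_map_funspace[OF cp] that by blast
    then show "s (p x) \<in> topspace X" "p (s (p x)) = p x"
      using continuous_map_funspace[OF cs] ps by blast+
  qed
  have cj: "continuous_map X ?XX j"
    unfolding fib_prod_space_def j_def
  proof (rule continuous_map_in_subtopology[THEN iffD2], intro conjI)
    show "continuous_map X (prod_topology X X) (\<lambda>x. (x, s (p x)))"
      using continuous_map_compose[OF cp cs] by (simp add: continuous_map_paired o_def)
    show "(\<lambda>x. (x, s (p x))) \<in> topspace X \<rightarrow> {(x, y). x \<in> topspace X \<and> y \<in> topspace X \<and> p x = p y}"
      using spx by auto
  qed
  define U where "U = {x \<in> topspace X. j x \<in> V}"
  have oU: "openin X U" unfolding U_def by (rule openin_continuous_map_preimage[OF cj oV])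
  have tsU: "topspace (subtopology X U) = U" using openin_subset[OF oU] by (simp add: topspace_subtopology Int_absorb1)
  have cjU: "continuous_map (subtopology X U) (subtopology ?XX V) j"
    using continuous_map_from_subtopology[OF cj] tsU unfolding U_def
    by (simp add: continuous_map_in_subtopology Pi_iff)
  have jsb: "j (s b) = fib_prod_sec s b" if "b \<in> topspace B" for b
    using ps[OF that] by (simp add: j_def fib_prod_sec_def)
  have sU: "s ` topspace B \<subseteq> U"
  proof
    fix x assume "x \<in> s ` topspace B"
    then obtain b where b: "b \<in> topspace B" "x = s b" by blast
    then have "s b \<in> topspace X" using continuous_map_funspace[OF cs] by blast
    moreover have "j (s b) \<in> V" using jsb[OF b(1)] secV b(1) by blast
    ultimately show "x \<in> U" using b unfolding U_def by blast
  qed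
  let ?Q = "\<lambda>h. (\<forall>x\<in>U. p (h x) = p x) \<and> (\<forall>b\<in>topspace B. h (s b) = s b)"
  let ?P' = "\<lambda>h. ?PV h \<and> (\<forall>z\<in>V. h z \<in> topspace ?XX)"
  have hom': "homotopic_with ?P' (subtopology ?XX V) ?XX (fib_Pi \<circ> \<sigma>) id"
  proof (rule homotopic_with_mono[OF hom])
    fix h assume "continuous_map (subtopology ?XX V) ?XX h" "?PV h"
    then show "?P' h" using continuous_map_funspace tsV by blast
  qed
  let ?Qk = "\<lambda>k. (\<forall>x\<in>U. p (fst (k x)) = p x \<and> k x \<in> topspace ?XX) \<and>
                 (\<forall>b\<in>topspace B. k (s b) = fib_prod_sec s b)"
  have homJ: "homotopic_with ?Qk (subtopology X U) ?XX (fib_Pi \<circ> \<sigma> \<circ> j) (id \<circ> j)"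
  proof (rule homotopic_with_compose_continuous_map_right[OF hom' cjU])
    fix h assume h: "?P' h"
    show "?Qk (h \<circ> j)"
    proof (intro conjI ballI)
      fix x assume "x \<in> U"
      then have jx: "j x \<in> V" "x \<in> topspace X" unfolding U_def by auto
      then have "fib_prod_proj p (h (j x)) = fib_prod_proj p (j x)" using h by blast
      then show "p (fst ((h \<circ> j) x)) = p x"
        by (simp add: fib_prod_proj_eq j_def)
      show "(h \<circ> j) x \<in> topspace ?XX" using h jx by auto
    next
      fix b assume b: "b \<in> topspace B"
      show "(h \<circ> j) (s b) = fib_prod_sec s b" using h b jsb[OF b] by simp
    qed
  qed
  have H1: "homotopic_with ?Q (subtopology X U) X (fst \<circ> (fib_Pi \<circ> \<sigma> \<circ> j)) (fst \<circ> (id \<circ> j))"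
  proof (rule homotopic_with_compose_continuous_map_left[OF homJ cont_fst_fib_prod])
    fix k assume "?Qk k"
    then show "?Q (fst \<circ> k)" by (simp add: fib_prod_sec_def)
  qed
  have H2: "homotopic_with ?Q (subtopology X U) X (snd \<circ> (fib_Pi \<circ> \<sigma> \<circ> j)) (snd \<circ> (id \<circ> j))"
  proof (rule homotopic_with_compose_continuous_map_left[OF homJ cont_snd_fib_prod])
    fix k assume k: "?Qk k"
    show "?Q (snd \<circ> k)"
    proof (intro conjI ballI)
      fix x assume x: "x \<in> U"
      then have "k x \<in> topspace ?XX" "p (fst (k x)) = p x" using k by auto
      then show "p ((snd \<circ> k) x) = p x" by (auto simp: topspace_fib_prod)
    next
      fix b assume "b \<in> topspace B"
      then show "(snd \<circ> k) (s b) = s b" using k by (simp add: fib_prod_sec_def)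
    qed
  qed
  define \<gamma> where "\<gamma> = snd \<circ> \<sigma> \<circ> j"
  have c\<gamma>: "continuous_map (subtopology X U) (path_space_top X) \<gamma>"
    unfolding \<gamma>_def
    by (intro continuous_map_compose[OF cjU] continuous_map_compose[OF c\<sigma>])
       (simp add: fib_path_space_def continuous_map_subtopology_snd)
  have \<gamma>fib: "p (\<gamma> x t) = p x" if "x \<in> U" "t \<in> {0..1}" for x t
  proof -
    have jx: "j x \<in> V" "x \<in> topspace X" using that unfolding U_def by auto
    have "\<sigma> (j x) \<in> topspace ?PB" using continuous_map_funspace[OF c\<sigma>] jx tsV by blast
    then have "p (snd (\<sigma> (j x)) t) = fst (\<sigma> (j x))" using that(2)
      by (auto simp: topspace_fib_path)
    also have "\<dots> = p x" using \<sigma>p jx by (simp add: fib_path_proj_def fib_prod_proj_eq j_def)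
    finally show ?thesis by (simp add: \<gamma>_def)
  qed
  have \<gamma>s: "\<gamma> (s b) t = s b" if "b \<in> topspace B" "t \<in> {0..1}" for b t
    using that jsb[OF that(1)] \<sigma>s by (simp add: \<gamma>_def fib_path_sec_def)
  have H3: "homotopic_with ?Q (subtopology X U) X (fst \<circ> (fib_Pi \<circ> \<sigma> \<circ> j)) (snd \<circ> (fib_Pi \<circ> \<sigma> \<circ> j))"
  proof (subst homotopic_with, goal_cases)
    case (1 h k)
    have "\<And>b. b \<in> topspace B \<Longrightarrow> s b \<in> topspace (subtopology X U)" using sU tsU by blast
    moreover have "\<And>x. x \<in> U \<Longrightarrow> h x = k x" using 1 tsU by blast
    ultimately show ?case using tsU by (metis (no_types, lifting))
  next
    case 2
    show ?case
    proof (intro exI[of _ "\<lambda>(t,x). \<gamma> x t"] conjI ballI)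
      have "continuous_map (prod_topology (top_of_set {0..1}) (subtopology X U))
               (prod_topology (path_space_top X) (top_of_set {0..1})) (\<lambda>(t,x). (\<gamma> x, t))"
      proof -
        have "continuous_map (prod_topology (top_of_set {0..1}) (subtopology X U))
               (prod_topology (path_space_top X) (top_of_set {0..1})) (\<lambda>w. ((\<gamma> \<circ> snd) w, fst w))"
          by (intro continuous_map_paired[THEN iffD2] conjI continuous_map_compose[OF continuous_map_snd c\<gamma>]
                continuous_map_fst)
        then show ?thesis by (rule continuous_map_eq) auto
      qed
      then have "continuous_map (prod_topology (top_of_set {0..1}) (subtopology X U)) X
                  ((\<lambda>(\<alpha>,t). \<alpha> t) \<circ> (\<lambda>(t,x). (\<gamma> x, t)))"
        by (rule continuous_map_compose[OF _ path_eval])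
      then show "continuous_map (prod_topology (top_of_set {0..1}) (subtopology X U)) X (\<lambda>(t,x). \<gamma> x t)"
        by (rule continuous_map_eq) auto
    next
      fix x assume "x \<in> topspace (subtopology X U)"
      show "(\<lambda>(t,x). \<gamma> x t) (0, x) = (fst \<circ> (fib_Pi \<circ> \<sigma> \<circ> j)) x"
        by (simp add: \<gamma>_def fib_Pi_eq)
    next
      fix x assume "x \<in> topspace (subtopology X U)"
      show "(\<lambda>(t,x). \<gamma> x t) (1, x) = (snd \<circ> (fib_Pi \<circ> \<sigma> \<circ> j)) x"
        by (simp add: \<gamma>_def fib_Pi_eq)
    qed (use \<gamma>fib \<gamma>s in auto)
  qed
  have H4: "homotopic_with ?Q (subtopology X U) X (fst \<circ> (id \<circ> j)) (snd \<circ> (id \<circ> j))"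
    using homotopic_with_trans[OF homotopic_with_trans[OF homotopic_with_symD[OF H1] H3] H2] .
  have H5: "homotopic_with ?Q (subtopology X U) X (s \<circ> p) id"
  proof (rule homotopic_with_eq[OF homotopic_with_symD[OF H4]], goal_cases)
    case (1 x) then show ?case by (simp add: j_def)
  next
    case (2 x) then show ?case by (simp add: j_def)
  next
    case (3 h k)
    have "\<And>b. b \<in> topspace B \<Longrightarrow> s b \<in> topspace (subtopology X U)" using sU tsU by blast
    moreover have "\<And>x. x \<in> U \<Longrightarrow> h x = k x" using 3 tsU by blast
    ultimately show ?case using tsU by (metis (no_types, lifting))
  qed
  have "fp_sectional B B id id X p s s U"
    unfolding fp_sectional_def
  proof (intro conjI exI[of _ p])
    show "openin X U" by (rule oU)
    show "s ` topspace B \<subseteq> U" by (rule sU)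
    show "continuous_map (subtopology X U) B p" by (rule continuous_map_from_subtopology[OF cp])
    show "\<forall>x\<in>U. id (p x) = p x" by simp
    show "\<forall>b\<in>topspace B. p (s b) = id b" using ps by simp
    show "homotopic_with ?Q (subtopology X U) X (s \<circ> p) id" by (rule H5)
  qed
  then show ?thesis unfolding U_def j_def .
qed


lemma part_b_sectional:
  assumes fps: "fibrewise_pointed_space B X p s"
   and U: "fp_sectional B B id id (fib_prod_space p X) (fib_prod_proj p) (fib_prod_sec s) (fib_prod_sec s) U"
  shows "fp_sectional B (fib_path_space B X p) fib_path_proj (fib_path_sec s)
           (fib_prod_space p X) (fib_prod_proj p) (fib_prod_sec s) fib_Pi U"
proof -
  have cp: "continuous_map X B p" and cs: "continuous_map B X s" and ps: "\<And>b. b \<in> topspace B \<Longrightarrow> p (s b) = b"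
    using fps unfolding fibrewise_pointed_space_def by auto
  let ?XX = "fib_prod_space p X"
  let ?P = "\<lambda>h. (\<forall>x\<in>U. fib_prod_proj p (h x) = fib_prod_proj p x) \<and>
                (\<forall>b\<in>topspace B. h (fib_prod_sec s b) = fib_prod_sec s b)"
  obtain \<sigma>0 where oU: "openin ?XX U" and secU: "fib_prod_sec s ` topspace B \<subseteq> U"
    and c\<sigma>0: "continuous_map (subtopology ?XX U) B \<sigma>0"
    and \<sigma>0p: "\<forall>x\<in>U. id (\<sigma>0 x) = fib_prod_proj p x"
    and hom: "homotopic_with ?P (subtopology ?XX U) ?XX (fib_prod_sec s \<circ> \<sigma>0) id"
    using U unfolding fp_sectional_def by blast
  have UXX: "U \<subseteq> topspace ?XX" using openin_subset[OF oU] .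
  have tsU: "topspace (subtopology ?XX U) = U" using UXX by (simp add: topspace_subtopology Int_absorb1)
  define \<sigma> where "\<sigma> = (\<lambda>z. (fib_prod_proj p z, restrict (\<lambda>t. s (fib_prod_proj p z)) {0..1::real}))"
  have cpp: "continuous_map (subtopology ?XX U) B (fib_prod_proj p)"
    by (rule continuous_map_from_subtopology[OF cont_fib_prod_proj[OF cp]])
  have c\<sigma>: "continuous_map (subtopology ?XX U) (fib_path_space B X p) \<sigma>"
    unfolding \<sigma>_def
  proof (rule cont_into_fib_path[OF cpp])
    show "continuous_map (prod_topology (subtopology ?XX U) (top_of_set {0..1})) X
            (\<lambda>(z, t). s (fib_prod_proj p z))"
    proof -
      have "continuous_map (prod_topology (subtopology ?XX U) (top_of_set {0..1})) X
            (s \<circ> fib_prod_proj p \<circ> fst)"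
        by (intro continuous_map_compose[OF continuous_map_fst] continuous_map_compose[OF cpp cs])
      then show ?thesis by (rule continuous_map_eq) auto
    qed
    fix z t assume "z \<in> topspace (subtopology ?XX U)" "t \<in> {0..1::real}"
    then have "fib_prod_proj p z \<in> topspace B"
      using continuous_map_funspace[OF cpp] by blast
    then show "p (s (fib_prod_proj p z)) = fib_prod_proj p z" by (rule ps)
  qed
  show ?thesis
    unfolding fp_sectional_def
  proof (intro conjI)
    show "openin ?XX U" by (rule oU)
    show "fib_prod_sec s ` topspace B \<subseteq> U" by (rule secU)
    show "\<exists>sa. continuous_map (subtopology ?XX U) (fib_path_space B X p) sa \<and>
        (\<forall>x\<in>U. fib_path_proj (sa x) = fib_prod_proj p x) \<and>
        (\<forall>b\<in>topspace B. sa (fib_prod_sec s b) = fib_path_sec s b) \<and>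
        homotopic_with ?P (subtopology ?XX U) ?XX (fib_Pi \<circ> sa) id"
    proof (intro exI[of _ \<sigma>] conjI)
      show "continuous_map (subtopology ?XX U) (fib_path_space B X p) \<sigma>" by (rule c\<sigma>)
      show "\<forall>x\<in>U. fib_path_proj (\<sigma> x) = fib_prod_proj p x"
        by (simp add: \<sigma>_def fib_path_proj_def)
      show "\<forall>b\<in>topspace B. \<sigma> (fib_prod_sec s b) = fib_path_sec s b"
        by (simp add: \<sigma>_def fib_path_sec_def fib_prod_sec_def fib_prod_proj_def ps)
      show "homotopic_with ?P (subtopology ?XX U) ?XX (fib_Pi \<circ> \<sigma>) id"
      proof (rule homotopic_with_eq[OF hom], goal_cases)
        case (1 x)
        then have "x \<in> U" using tsU by simp
        then show ?case
          using \<sigma>0p by (simp add: \<sigma>_def fib_Pi_def fib_prod_sec_def)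
      next
        case (2 x)
        show ?case by simp
      next
        case (3 h k)
        have "\<And>b. b \<in> topspace B \<Longrightarrow> fib_prod_sec s b \<in> topspace (subtopology ?XX U)"
          using secU tsU by blast
        moreover have "\<And>x. x \<in> U \<Longrightarrow> h x = k x" using 3 tsU by blast
        ultimately show ?case using tsU by (metis (no_types, lifting))
      qed
    qed
  qed
qed


lemma fib_Pi_eq': "fib_Pi z = (snd z 0, snd z 1)"
  by (cases z) (simp add: fib_Pi_def)

lemma topspace_pullback:
  "topspace (pullback_space B' lam X p) = {(b',x). b' \<in> topspace B' \<and> x \<in> topspace X \<and> lam b' = p x}"
  unfolding pullback_space_def by auto

lemma pp'_eq: "fib_prod_proj pullback_proj z = fst (fst z)"
  by (cases z) (simp add: fib_prod_proj_def pullback_proj_def)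

lemma ss'_eq: "fib_prod_sec (pullback_sec lam s) b' = ((b', s (lam b')), (b', s (lam b')))"
  by (simp add: fib_prod_sec_def pullback_sec_def)

lemma cont_into_pullback:
  "continuous_map Z (pullback_space B' lam X p) f \<longleftrightarrow>
   continuous_map Z (prod_topology B' X) f \<and>
   f \<in> topspace Z \<rightarrow> {(b', x). b' \<in> topspace B' \<and> x \<in> topspace X \<and> lam b' = p x}"
  unfolding pullback_space_def by (rule continuous_map_in_subtopology)

lemma cont_into_fib_prod:
  "continuous_map Z (fib_prod_space p X) f \<longleftrightarrow>
   continuous_map Z (prod_topology X X) f \<and>
   f \<in> topspace Z \<rightarrow> {(x, y). x \<in> topspace X \<and> y \<in> topspace X \<and> p x = p y}"
  unfolding fib_prod_space_def by (rule continuous_map_in_subtopology)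

lemma part_c_sectional:
  fixes B :: "'b topology" and X :: "'a topology" and p :: "'a \<Rightarrow> 'b" and s :: "'b \<Rightarrow> 'a"
    and B' :: "'c topology" and lam :: "'c \<Rightarrow> 'b"
  assumes fps: "fibrewise_pointed_space B X p s"
   and clam: "continuous_map B' B lam"
   and V: "fp_sectional B (fib_path_space B X p) fib_path_proj (fib_path_sec s)
           (fib_prod_space p X) (fib_prod_proj p) (fib_prod_sec s) fib_Pi V"
  shows "fp_sectional B' (fib_path_space B' (pullback_space B' lam X p) pullback_proj) fib_path_proj
           (fib_path_sec (pullback_sec lam s))
           (fib_prod_space pullback_proj (pullback_space B' lam X p)) (fib_prod_proj pullback_proj)
           (fib_prod_sec (pullback_sec lam s)) fib_Pi
           {z \<in> topspace (fib_prod_space pullback_proj (pullback_space B' lam X p)).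
              (snd (fst z), snd (snd z)) \<in> V}"
proof -
  have cp: "continuous_map X B p" and cs: "continuous_map B X s" and ps: "\<And>b. b \<in> topspace B \<Longrightarrow> p (s b) = b"
    using fps unfolding fibrewise_pointed_space_def by auto
  let ?XX = "fib_prod_space p X"
  let ?PB = "fib_path_space B X p"
  let ?Y = "pullback_space B' lam X p"
  let ?XX' = "fib_prod_space pullback_proj ?Y"
  let ?PB' = "fib_path_space B' ?Y pullback_proj"
  let ?PV = "\<lambda>h. (\<forall>x\<in>V. fib_prod_proj p (h x) = fib_prod_proj p x) \<and>
                (\<forall>b\<in>topspace B. h (fib_prod_sec s b) = fib_prod_sec s b)"
  obtain \<sigma> where oV: "openin ?XX V" and secV: "fib_prod_sec s ` topspace B \<subseteq> V"
    and c\<sigma>: "continuous_map (subtopology ?XX V) ?PB \<sigma>"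
    and \<sigma>p: "\<forall>x\<in>V. fib_path_proj (\<sigma> x) = fib_prod_proj p x"
    and \<sigma>s: "\<forall>b\<in>topspace B. \<sigma> (fib_prod_sec s b) = fib_path_sec s b"
    and hom: "homotopic_with ?PV (subtopology ?XX V) ?XX (fib_Pi \<circ> \<sigma>) id"
    using V unfolding fp_sectional_def by blast
  have VXX: "V \<subseteq> topspace ?XX" using openin_subset[OF oV] .
  have tsV: "topspace (subtopology ?XX V) = V" using VXX by (simp add: topspace_subtopology Int_absorb1)
  have lamB: "lam b' \<in> topspace B" if "b' \<in> topspace B'" for b'
    using continuous_map_funspace[OF clam] that by blast
  have sB: "s b \<in> topspace X" if "b \<in> topspace B" for b
    using continuous_map_funspace[OF cs] that by blast
  have tsXX': "z \<in> topspace ?XX' \<longleftrightarrow>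
     fst (fst z) \<in> topspace B' \<and> snd (fst z) \<in> topspace X \<and> lam (fst (fst z)) = p (snd (fst z)) \<and>
     fst (snd z) \<in> topspace B' \<and> snd (snd z) \<in> topspace X \<and> lam (fst (snd z)) = p (snd (snd z)) \<and>
     fst (fst z) = fst (snd z)" for z
    by (cases z) (auto simp: topspace_fib_prod topspace_pullback pullback_proj_def)
  define \<phi> where "\<phi> = (\<lambda>z::('c \<times> 'a) \<times> ('c \<times> 'a). (snd (fst z), snd (snd z)))"
  have cY: "continuous_map ?Y X snd"
    unfolding pullback_space_def by (rule continuous_map_subtopology_snd)
  have cYB: "continuous_map ?Y B' fst"
    unfolding pullback_space_def by (rule continuous_map_subtopology_fst)
  have c\<phi>: "continuous_map ?XX' ?XX \<phi>"
  proof (rule cont_into_fib_prod[THEN iffD2], intro conjI)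
    have "continuous_map ?XX' (prod_topology X X) (\<lambda>z. ((snd \<circ> fst) z, (snd \<circ> snd) z))"
      by (intro continuous_map_paired[THEN iffD2] conjI continuous_map_compose[OF cont_fst_fib_prod cY]
           continuous_map_compose[OF cont_snd_fib_prod cY])
    then show "continuous_map ?XX' (prod_topology X X) \<phi>" unfolding \<phi>_def by simp
    show "\<phi> \<in> topspace ?XX' \<rightarrow> {(x, y). x \<in> topspace X \<and> y \<in> topspace X \<and> p x = p y}"
      unfolding \<phi>_def using tsXX' by auto
  qed
  define U' where "U' = {z \<in> topspace ?XX'. \<phi> z \<in> V}"
  have oU: "openin ?XX' U'" unfolding U'_def by (rule openin_continuous_map_preimage[OF c\<phi> oV])
  have tsU: "topspace (subtopology ?XX' U') = U'" using openin_subset[OF oU] by (simp add: topspace_subtopology Int_absorb1)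
  have c\<phi>U: "continuous_map (subtopology ?XX' U') (subtopology ?XX V) \<phi>"
    using continuous_map_from_subtopology[OF c\<phi>] tsU unfolding U'_def
    by (simp add: continuous_map_in_subtopology Pi_iff)
  have \<phi>ss: "\<phi> (fib_prod_sec (pullback_sec lam s) b') = fib_prod_sec s (lam b')" for b'
    by (simp add: \<phi>_def ss'_eq fib_prod_sec_def pullback_sec_def)
  have ssU: "fib_prod_sec (pullback_sec lam s) ` topspace B' \<subseteq> U'"
  proof
    fix z assume "z \<in> fib_prod_sec (pullback_sec lam s) ` topspace B'"
    then obtain b' where b': "b' \<in> topspace B'" "z = fib_prod_sec (pullback_sec lam s) b'" by blast
    have "z \<in> topspace ?XX'" using b' lamB sB ps tsXX' by (simp add: ss'_eq)
    moreover have "\<phi> z \<in> V" using b' \<phi>ss secV lamB by blast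
    ultimately show "z \<in> U'" unfolding U'_def by blast
  qed
  define \<gamma> where "\<gamma> = snd \<circ> \<sigma> \<circ> \<phi>"
  have c\<gamma>: "continuous_map (subtopology ?XX' U') (path_space_top X) \<gamma>"
    unfolding \<gamma>_def
    by (intro continuous_map_compose[OF c\<phi>U] continuous_map_compose[OF c\<sigma>])
       (simp add: fib_path_space_def continuous_map_subtopology_snd)
  have \<gamma>prop: "p (\<gamma> z t) = lam (fst (fst z)) \<and> \<gamma> z t \<in> topspace X" if "z \<in> U'" "t \<in> {0..1}" for z t
  proof -
    have z: "\<phi> z \<in> V" "z \<in> topspace ?XX'" using that unfolding U'_def by auto
    have "\<sigma> (\<phi> z) \<in> topspace ?PB" using continuous_map_funspace[OF c\<sigma>] z tsV by blast
    then have "p (snd (\<sigma> (\<phi> z)) t) = fst (\<sigma> (\<phi> z)) \<and> snd (\<sigma> (\<phi> z)) t \<in> topspace X" using that(2)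
      by (auto simp: topspace_fib_path pathin_def dest!: continuous_map_funspace)
    moreover have "fst (\<sigma> (\<phi> z)) = lam (fst (fst z))"
    proof -
      have "fst (\<sigma> (\<phi> z)) = p (snd (fst z))"
        using \<sigma>p z(1) by (simp add: fib_path_proj_def fib_prod_proj_eq \<phi>_def)
      moreover have "lam (fst (fst z)) = p (snd (fst z))" using z(2) tsXX' by blast
      ultimately show ?thesis by simp
    qed
    ultimately show ?thesis by (simp add: \<gamma>_def)
  qed
  have \<gamma>s: "\<gamma> (fib_prod_sec (pullback_sec lam s) b') t = s (lam b')" if "b' \<in> topspace B'" "t \<in> {0..1}" for b' t
    using that \<phi>ss \<sigma>s lamB by (simp add: \<gamma>_def fib_path_sec_def)
  have c\<gamma>ev: "continuous_map (prod_topology (subtopology ?XX' U') (top_of_set {0..1::real})) X (\<lambda>(z,t). \<gamma> z t)"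
  proof -
    have "continuous_map (prod_topology (subtopology ?XX' U') (top_of_set {0..1::real}))
               (prod_topology (path_space_top X) (top_of_set {0..1::real})) (\<lambda>w. ((\<gamma> \<circ> fst) w, snd w))"
      by (intro continuous_map_paired[THEN iffD2] conjI continuous_map_compose[OF continuous_map_fst c\<gamma>]
            continuous_map_snd)
    then have "continuous_map (prod_topology (subtopology ?XX' U') (top_of_set {0..1::real})) X
                  ((\<lambda>(\<alpha>,t). \<alpha> t) \<circ> (\<lambda>w. ((\<gamma> \<circ> fst) w, snd w)))"
      by (rule continuous_map_compose[OF _ path_eval])
    then show ?thesis by (rule continuous_map_eq) auto
  qed
  have cpp': "continuous_map (subtopology ?XX' U') B' (fib_prod_proj pullback_proj)"
  proof -
    have "continuous_map ?XX' B' (fst \<circ> fst)"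
      by (rule continuous_map_compose[OF cont_fst_fib_prod cYB])
    then have "continuous_map ?XX' B' (fib_prod_proj pullback_proj)"
      by (rule continuous_map_eq) (simp add: pp'_eq)
    then show ?thesis by (rule continuous_map_from_subtopology)
  qed
  define \<sigma>' where "\<sigma>' = (\<lambda>z. (fib_prod_proj pullback_proj z,
                         restrict (\<lambda>t. (fib_prod_proj pullback_proj z, \<gamma> z t)) {0..1::real}))"
  have c\<sigma>': "continuous_map (subtopology ?XX' U') ?PB' \<sigma>'"
    unfolding \<sigma>'_def
  proof (rule cont_into_fib_path[OF cpp'])
    show "continuous_map (prod_topology (subtopology ?XX' U') (top_of_set {0..1::real})) ?Y
       (\<lambda>(z, t). (fib_prod_proj pullback_proj z, \<gamma> z t))"
    proof (rule cont_into_pullback[THEN iffD2], intro conjI)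
      have "continuous_map (prod_topology (subtopology ?XX' U') (top_of_set {0..1::real})) (prod_topology B' X)
         (\<lambda>w. ((fib_prod_proj pullback_proj \<circ> fst) w, (\<lambda>(z,t). \<gamma> z t) w))"
        by (intro continuous_map_paired[THEN iffD2] conjI continuous_map_compose[OF continuous_map_fst cpp'] c\<gamma>ev)
      then show "continuous_map (prod_topology (subtopology ?XX' U') (top_of_set {0..1::real})) (prod_topology B' X)
         (\<lambda>(z, t). (fib_prod_proj pullback_proj z, \<gamma> z t))"
        by (rule continuous_map_eq) auto
      show "(\<lambda>(z, t). (fib_prod_proj pullback_proj z, \<gamma> z t))
          \<in> topspace (prod_topology (subtopology ?XX' U') (top_of_set {0..1::real})) \<rightarrow>
          {(b', x). b' \<in> topspace B' \<and> x \<in> topspace X \<and> lam b' = p x}"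
      proof (rule Pi_I, clarify)
        fix z t assume zt: "(z, t) \<in> topspace (prod_topology (subtopology ?XX' U') (top_of_set {0..1::real}))"
        then have z: "z \<in> U'" "t \<in> {0..1}" using tsU by auto
        then have "z \<in> topspace ?XX'" unfolding U'_def by blast
        then show "fib_prod_proj pullback_proj z \<in> topspace B' \<and> \<gamma> z t \<in> topspace X \<and>
             lam (fib_prod_proj pullback_proj z) = p (\<gamma> z t)"
          using \<gamma>prop[OF z] tsXX' by (simp add: pp'_eq)
      qed
    qed
  next
    fix z t show "pullback_proj (fib_prod_proj pullback_proj z, \<gamma> z t) = fib_prod_proj pullback_proj z"
      by (simp add: pullback_proj_def)
  qed
  let ?P'' = "\<lambda>h. (\<forall>x\<in>U'. fib_prod_proj pullback_proj (h x) = fib_prod_proj pullback_proj x) \<and>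
                (\<forall>b\<in>topspace B'. h (fib_prod_sec (pullback_sec lam s) b) = fib_prod_sec (pullback_sec lam s) b)"
  obtain k where ck: "continuous_map (prod_topology (top_of_set {0..1::real}) (subtopology ?XX V)) ?XX k"
    and k0: "\<And>x. k (0, x) = (fib_Pi \<circ> \<sigma>) x" and k1: "\<And>x. k (1, x) = id x"
    and kP: "\<And>t. t \<in> {0..1::real} \<Longrightarrow> ?PV (\<lambda>x. k (t, x))"
    using hom unfolding homotopic_with_def by blast
  define K where "K = (\<lambda>(t, z). ((fib_prod_proj pullback_proj z, fst (k (t, \<phi> z))),
                                   (fib_prod_proj pullback_proj z, snd (k (t, \<phi> z)))))"
  have kprop: "p (fst (k (t, \<phi> z))) = lam (fst (fst z)) \<and> p (snd (k (t, \<phi> z))) = lam (fst (fst z)) \<and>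
        fst (k (t, \<phi> z)) \<in> topspace X \<and> snd (k (t, \<phi> z)) \<in> topspace X"
    if "z \<in> U'" "t \<in> {0..1}" for z t
  proof -
    have z: "\<phi> z \<in> V" "z \<in> topspace ?XX'" using that unfolding U'_def by auto
    have "k (t, \<phi> z) \<in> topspace ?XX"
      using continuous_map_funspace[OF ck] z that(2) tsV by auto
    moreover have "fib_prod_proj p (k (t, \<phi> z)) = fib_prod_proj p (\<phi> z)" using kP[OF that(2)] z by blast
    ultimately show ?thesis using z tsXX'
      by (cases "k (t, \<phi> z)") (auto simp: topspace_fib_prod fib_prod_proj_def \<phi>_def)
  qed
  have KP: "(\<forall>x\<in>U'. fib_prod_proj pullback_proj (K (t, x)) = fib_prod_proj pullback_proj x) \<and>
     (\<forall>b\<in>topspace B'. K (t, fib_prod_sec (pullback_sec lam s) b) = fib_prod_sec (pullback_sec lam s) b)"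
    if t: "t \<in> {0..1::real}" for t
  proof -
      have "\<forall>b\<in>topspace B'. K (t, fib_prod_sec (pullback_sec lam s) b) = fib_prod_sec (pullback_sec lam s) b"
      proof
        fix b assume b: "b \<in> topspace B'"
        have "k (t, fib_prod_sec s (lam b)) = fib_prod_sec s (lam b)" using kP[OF t] lamB[OF b] by blast
        then show "K (t, fib_prod_sec (pullback_sec lam s) b) = fib_prod_sec (pullback_sec lam s) b"
          by (simp add: K_def \<phi>_def pullback_sec_def fib_prod_sec_def pp'_eq)
      qed
      moreover have "\<forall>x\<in>U'. fib_prod_proj pullback_proj (K (t, x)) = fib_prod_proj pullback_proj x"
        by (simp add: K_def pp'_eq)
      ultimately show ?thesis by blast
  qed
  have H: "homotopic_with ?P'' (subtopology ?XX' U') ?XX' (fib_Pi \<circ> \<sigma>') id"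
  proof (subst homotopic_with, goal_cases)
    case (1 h h')
    have "\<And>b. b \<in> topspace B' \<Longrightarrow> fib_prod_sec (pullback_sec lam s) b \<in> topspace (subtopology ?XX' U')"
      using ssU tsU by blast
    moreover have "\<And>x. x \<in> U' \<Longrightarrow> h x = h' x" using 1 tsU by blast
    ultimately show ?case using tsU by (metis (no_types, lifting))
  next
    case 2
    show ?case
    proof (intro exI[of _ K] conjI ballI)
      have ck': "continuous_map (prod_topology (top_of_set {0..1::real}) (subtopology ?XX' U')) ?XX
               (\<lambda>w. k (fst w, \<phi> (snd w)))"
      proof -
        have "continuous_map (prod_topology (top_of_set {0..1::real}) (subtopology ?XX' U'))
             (prod_topology (top_of_set {0..1::real}) (subtopology ?XX V)) (\<lambda>w. (fst w, (\<phi> \<circ> snd) w))"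
          by (intro continuous_map_paired[THEN iffD2] conjI continuous_map_compose[OF continuous_map_snd c\<phi>U]
              continuous_map_fst)
        then show ?thesis using continuous_map_compose[OF _ ck] by (simp add: o_def)
      qed
      have cpp2: "continuous_map (prod_topology (top_of_set {0..1::real}) (subtopology ?XX' U')) B'
               (\<lambda>w. fib_prod_proj pullback_proj (snd w))"
        using continuous_map_compose[OF continuous_map_snd cpp'] by (simp add: o_def)
      have memb: "w \<in> topspace (prod_topology (top_of_set {0..1::real}) (subtopology ?XX' U')) \<Longrightarrow>
          snd w \<in> U' \<and> fst w \<in> {0..1}" for w
        unfolding topspace_prod_topology tsU by (simp add: mem_Times_iff)
      have cYi: "continuous_map (prod_topology (top_of_set {0..1::real}) (subtopology ?XX' U')) ?Y
               (\<lambda>w. (fib_prod_proj pullback_proj (snd w), g (k (fst w, \<phi> (snd w)))))"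
        if g: "continuous_map ?XX X g" and gp: "\<And>w. w \<in> topspace ?XX \<Longrightarrow> p (g w) = p (fst w)"
        for g
      proof (rule cont_into_pullback[THEN iffD2], intro conjI)
        show "continuous_map (prod_topology (top_of_set {0..1::real}) (subtopology ?XX' U')) (prod_topology B' X)
           (\<lambda>w. (fib_prod_proj pullback_proj (snd w), g (k (fst w, \<phi> (snd w)))))"
        proof -
          have "continuous_map (prod_topology (top_of_set {0..1::real}) (subtopology ?XX' U')) X
             (\<lambda>w. g (k (fst w, \<phi> (snd w))))"
            using continuous_map_compose[OF ck' g] by (simp add: o_def)
          then show ?thesis using cpp2 by (intro continuous_map_paired[THEN iffD2] conjI)
        qed
        show "(\<lambda>w. (fib_prod_proj pullback_proj (snd w), g (k (fst w, \<phi> (snd w)))))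
           \<in> topspace (prod_topology (top_of_set {0..1::real}) (subtopology ?XX' U')) \<rightarrow>
           {(b', x). b' \<in> topspace B' \<and> x \<in> topspace X \<and> lam b' = p x}"
        proof (rule Pi_I)
          fix w assume w: "w \<in> topspace (prod_topology (top_of_set {0..1::real}) (subtopology ?XX' U'))"
          then have m: "snd w \<in> U'" "fst w \<in> {0..1}" using memb[OF w] by auto
          have "k (fst w, \<phi> (snd w)) \<in> topspace ?XX"
            using continuous_map_funspace[OF ck'] w by auto
          then have "g (k (fst w, \<phi> (snd w))) \<in> topspace X"
            "p (g (k (fst w, \<phi> (snd w)))) = p (fst (k (fst w, \<phi> (snd w))))"
            using continuous_map_funspace[OF g] gp by auto
          moreover have "snd w \<in> topspace ?XX'" using m unfolding U'_def by blast
          ultimately show "(fib_prod_proj pullback_proj (snd w), g (k (fst w, \<phi> (snd w))))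
             \<in> {(b', x). b' \<in> topspace B' \<and> x \<in> topspace X \<and> lam b' = p x}"
            using kprop[OF m] tsXX' by (simp add: pp'_eq)
        qed
      qed
      have c1: "continuous_map (prod_topology (top_of_set {0..1::real}) (subtopology ?XX' U')) ?Y
               (\<lambda>w. (fib_prod_proj pullback_proj (snd w), fst (k (fst w, \<phi> (snd w)))))"
        by (rule cYi[OF cont_fst_fib_prod]) simp
      have c2: "continuous_map (prod_topology (top_of_set {0..1::real}) (subtopology ?XX' U')) ?Y
               (\<lambda>w. (fib_prod_proj pullback_proj (snd w), snd (k (fst w, \<phi> (snd w)))))"
        by (rule cYi[OF cont_snd_fib_prod]) (auto simp: topspace_fib_prod)
      show "continuous_map (prod_topology (top_of_set {0..1::real}) (subtopology ?XX' U')) ?XX' K"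
      proof (rule cont_into_fib_prod[THEN iffD2], intro conjI)
        show "continuous_map (prod_topology (top_of_set {0..1::real}) (subtopology ?XX' U')) (prod_topology ?Y ?Y) K"
          using c1 c2 unfolding K_def by (simp add: continuous_map_paired case_prod_unfold)
        show "K \<in> topspace (prod_topology (top_of_set {0..1::real}) (subtopology ?XX' U')) \<rightarrow>
            {(x, y). x \<in> topspace ?Y \<and> y \<in> topspace ?Y \<and> pullback_proj x = pullback_proj y}"
        proof (rule Pi_I)
          fix w assume w: "w \<in> topspace (prod_topology (top_of_set {0..1::real}) (subtopology ?XX' U'))"
          have "(fib_prod_proj pullback_proj (snd w), fst (k (fst w, \<phi> (snd w)))) \<in> topspace ?Y"
            using continuous_map_funspace[OF c1] w by blast
          moreover have "(fib_prod_proj pullback_proj (snd w), snd (k (fst w, \<phi> (snd w)))) \<in> topspace ?Y"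
            using continuous_map_funspace[OF c2] w by blast
          ultimately show "K w \<in> {(x, y). x \<in> topspace ?Y \<and> y \<in> topspace ?Y \<and> pullback_proj x = pullback_proj y}"
            by (cases w) (simp add: K_def pullback_proj_def)
        qed
      qed
    next
      fix z assume "z \<in> topspace (subtopology ?XX' U')"
      then have z: "z \<in> U'" using tsU by simp
      show "K (0, z) = (fib_Pi \<circ> \<sigma>') z"
        using k0 by (simp add: K_def \<sigma>'_def fib_Pi_eq' \<gamma>_def)
    next
      fix z assume "z \<in> topspace (subtopology ?XX' U')"
      then have z: "z \<in> topspace ?XX'" using tsU unfolding U'_def by simp
      show "K (1, z) = id z"
        using k1 z tsXX' by (cases z) (auto simp: K_def \<phi>_def pp'_eq)
    qed (use KP in auto)
  qed
  show ?thesis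
    unfolding fp_sectional_def U'_def[symmetric, unfolded \<phi>_def]
  proof (intro conjI exI[of _ \<sigma>'])
    show "openin ?XX' U'" by (rule oU)
    show "fib_prod_sec (pullback_sec lam s) ` topspace B' \<subseteq> U'" by (rule ssU)
    show "continuous_map (subtopology ?XX' U') ?PB' \<sigma>'" by (rule c\<sigma>')
    show "\<forall>x\<in>U'. fib_path_proj (\<sigma>' x) = fib_prod_proj pullback_proj x"
      by (simp add: \<sigma>'_def fib_path_proj_def)
    show "\<forall>b\<in>topspace B'. \<sigma>' (fib_prod_sec (pullback_sec lam s) b) = fib_path_sec (pullback_sec lam s) b"
    proof
      fix b assume b: "b \<in> topspace B'"
      have "restrict (\<lambda>t. (b, \<gamma> (fib_prod_sec (pullback_sec lam s) b) t)) {0..1::real} =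
            restrict (\<lambda>t. (b, s (lam b))) {0..1}"
        using \<gamma>s[OF b] by (intro restrict_ext) simp
      then show "\<sigma>' (fib_prod_sec (pullback_sec lam s) b) = fib_path_sec (pullback_sec lam s) b"
        by (simp add: \<sigma>'_def fib_path_sec_def pp'_eq fib_prod_sec_def pullback_sec_def)
    qed
    show "homotopic_with ?P'' (subtopology ?XX' U') ?XX' (fib_Pi \<circ> \<sigma>') id" by (rule H)
  qed
qed

theorem proposition3p3:
  fixes B :: "'b topology" and X :: "'a topology" and p :: "'a \<Rightarrow> 'b" and s :: "'b \<Rightarrow> 'a"
  assumes "fibrewise_pointed_space B X p s"
  shows "catBB B X p s \<le> TCBB B X p s
       \<and> TCBB B X p s \<le> catBB B (fib_prod_space p X) (fib_prod_proj p) (fib_prod_sec s)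
       \<and> (\<forall>(B' :: 'c topology) (lam :: 'c \<Rightarrow> 'b). continuous_map B' B lam \<longrightarrow>
            TCBB B' (pullback_space B' lam X p) pullback_proj (pullback_sec lam s)
              \<le> TCBB B X p s)"
proof (intro conjI allI impI)
  have cp: "continuous_map X B p" and cs: "continuous_map B X s" and ps: "\<And>b. b \<in> topspace B \<Longrightarrow> p (s b) = b"
    using assms unfolding fibrewise_pointed_space_def by auto
  show "catBB B X p s \<le> TCBB B X p s"
    unfolding catBB_def TCBB_def
  proof (rule secat_mono[where \<phi> = "\<lambda>x. (x, s (p x))"])
    show "(\<lambda>x. (x, s (p x))) ` topspace X \<subseteq> topspace (fib_prod_space p X)"
    proof
      fix y assume "y \<in> (\<lambda>x. (x, s (p x))) ` topspace X"
      then obtain x where x: "x \<in> topspace X" "y = (x, s (p x))" by blast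
      have "p x \<in> topspace B" using continuous_map_funspace[OF cp] x by blast
      then show "y \<in> topspace (fib_prod_space p X)"
        using x continuous_map_funspace[OF cs] ps by (auto simp: topspace_fib_prod)
    qed
  next
    fix U assume "fp_sectional B (fib_path_space B X p) fib_path_proj (fib_path_sec s)
           (fib_prod_space p X) (fib_prod_proj p) (fib_prod_sec s) fib_Pi U"
    then show "fp_sectional B B id id X p s s {x \<in> topspace X. (x, s (p x)) \<in> U}"
      by (rule part_a_sectional[OF assms])
  qed
  show "TCBB B X p s \<le> catBB B (fib_prod_space p X) (fib_prod_proj p) (fib_prod_sec s)"
    unfolding catBB_def TCBB_def
  proof (rule secat_mono[where \<phi> = id])
    show "id ` topspace (fib_prod_space p X) \<subseteq> topspace (fib_prod_space p X)" by simp
  next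
    fix U assume U: "fp_sectional B B id id (fib_prod_space p X) (fib_prod_proj p) (fib_prod_sec s)
           (fib_prod_sec s) U"
    then have "U \<subseteq> topspace (fib_prod_space p X)"
      unfolding fp_sectional_def using openin_subset by blast
    then have "{x \<in> topspace (fib_prod_space p X). id x \<in> U} = U" by auto
    then show "fp_sectional B (fib_path_space B X p) fib_path_proj (fib_path_sec s)
           (fib_prod_space p X) (fib_prod_proj p) (fib_prod_sec s) fib_Pi
           {x \<in> topspace (fib_prod_space p X). id x \<in> U}"
      using part_b_sectional[OF assms U] by simp
  qed
  fix B' :: "'c topology" and lam :: "'c \<Rightarrow> 'b"
  assume clam: "continuous_map B' B lam"
  show "TCBB B' (pullback_space B' lam X p) pullback_proj (pullback_sec lam s) \<le> TCBB B X p s"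
    unfolding TCBB_def
  proof (rule secat_mono[where \<phi> = "\<lambda>z. (snd (fst z), snd (snd z))"])
    show "(\<lambda>z. (snd (fst z), snd (snd z))) ` topspace (fib_prod_space pullback_proj (pullback_space B' lam X p))
        \<subseteq> topspace (fib_prod_space p X)"
      by (auto simp: topspace_fib_prod topspace_pullback pullback_proj_def)
  next
    fix U assume "fp_sectional B (fib_path_space B X p) fib_path_proj (fib_path_sec s)
           (fib_prod_space p X) (fib_prod_proj p) (fib_prod_sec s) fib_Pi U"
    then show "fp_sectional B' (fib_path_space B' (pullback_space B' lam X p) pullback_proj) fib_path_proj
           (fib_path_sec (pullback_sec lam s))
           (fib_prod_space pullback_proj (pullback_space B' lam X p)) (fib_prod_proj pullback_proj)
           (fib_prod_sec (pullback_sec lam s)) fib_Pi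
           {z \<in> topspace (fib_prod_space pullback_proj (pullback_space B' lam X p)).
              (snd (fst z), snd (snd z)) \<in> U}"
      by (rule part_c_sectional[OF assms clam])
  qed
qed

end
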